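(* Let $(X,Y)$ be any one of the pairs $(F,L)$, $(L,F)$, $(J,j)$, $(j,J)$, $(P,Q)$, $(Q,P)$. For integers $a,b,c,d,e$ put $$\Delta_{xy}=X_{d-a}Y_{e-b}-X_{e-a}Y_{d-b},\quad \Delta_1=X_{d-c}Y_{e-b}-X_{e-c}Y_{d-b},\quad \Delta_2=X_{d-a}X_{e-c}-X_{e-a}X_{d-c}.$$ Then for all integers $k,m$, provided $\Delta_1\neq0$, $\Delta_2\neq0$ and (when $k<0$) $\Delta_{xy}\neq0$, $$\sum_{r=0}^k\left(\frac{\Delta_{xy}}{\Delta_1}\right)^rY_{m-k(a-c)-b+c+(a-c)r}=\frac{\Delta_{xy}}{\Delta_2}\left(\frac{\Delta_{xy}}{\Delta_1}\right)^kX_m-\frac{\Delta_1}{\Delta_2}X_{m-(k+1)(a-c)}.$$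
   Context: All sequences are indexed by $n\in\mathbb Z$. Fibonacci numbers $F_n$ and Lucas numbers $L_n$: $F_n=F_{n-1}+F_{n-2}$, $L_n=L_{n-1}+L_{n-2}$ for all $n\in\mathbb Z$, with $F_0=0,F_1=1,L_0=2,L_1=1$ (so $F_{-n}=(-1)^{n-1}F_n$, $L_{-n}=(-1)^nL_n$). Jacobsthal numbers $J_n$ and Jacobsthal–Lucas numbers $j_n$: $J_n=J_{n-1}+2J_{n-2}$, $j_n=j_{n-1}+2j_{n-2}$ for all $n\in\mathbb Z$, with $J_0=0,J_1=1,j_0=2,j_1=1$ (so $J_{-n}=(-1)^{n-1}2^{-n}J_n$, $j_{-n}=(-1)^n2^{-n}j_n$, rational for negative index). Pell numbers $P_n$ and Pell–Lucas numbers $Q_n$: $P_n=2P_{n-1}+P_{n-2}$, $Q_n=2Q_{n-1}+Q_{n-2}$ for all $n\in\mathbb Z$, with $P_0=0,P_1=1,Q_0=2,Q_1=2$ (so $P_{-n}=(-1)^{n-1}P_n$, $Q_{-n}=(-1)^nQ_n$). Summation convention: for an integer $k<0$, $\sum_{r=0}^k f_r$ means $-\sum_{r=k+1}^{-1} f_r$ (in particular it equals $0$ when $k=-1$). *)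

theory Defs
  imports Complex_Main
begin

text \<open>Second-order linear recurrence W_n = p W_(n-1) + q W_(n-2) with W_0 = w0, W_1 = w1,
extended to all integer indices (q nonzero) by running the recurrence backwards.\<close>

fun rec_fwd :: "real \<Rightarrow> real \<Rightarrow> real \<Rightarrow> real \<Rightarrow> nat \<Rightarrow> real" where
  "rec_fwd p q w0 w1 0 = w0"
| "rec_fwd p q w0 w1 (Suc 0) = w1"
| "rec_fwd p q w0 w1 (Suc (Suc n)) = p * rec_fwd p q w0 w1 (Suc n) + q * rec_fwd p q w0 w1 n"

fun rec_bwd :: "real \<Rightarrow> real \<Rightarrow> real \<Rightarrow> real \<Rightarrow> nat \<Rightarrow> real" where
  "rec_bwd p q w0 w1 0 = w0"
| "rec_bwd p q w0 w1 (Suc 0) = (w1 - p * w0) / q"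
| "rec_bwd p q w0 w1 (Suc (Suc n)) = (rec_bwd p q w0 w1 n - p * rec_bwd p q w0 w1 (Suc n)) / q"

definition lrec :: "real \<Rightarrow> real \<Rightarrow> real \<Rightarrow> real \<Rightarrow> int \<Rightarrow> real" where
  "lrec p q w0 w1 n = (if 0 \<le> n then rec_fwd p q w0 w1 (nat n) else rec_bwd p q w0 w1 (nat (- n)))"

definition Fib :: "int \<Rightarrow> real" where "Fib = lrec 1 1 0 1"
definition Luc :: "int \<Rightarrow> real" where "Luc = lrec 1 1 2 1"
definition Jac :: "int \<Rightarrow> real" where "Jac = lrec 1 2 0 1"
definition JacL :: "int \<Rightarrow> real" where "JacL = lrec 1 2 2 1"
definition Pell :: "int \<Rightarrow> real" where "Pell = lrec 2 1 0 1"
definition PellL :: "int \<Rightarrow> real" where "PellL = lrec 2 1 2 2"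

text \<open>Summation convention: for k >= 0 the sum over r = 0..k; for k < 0 it is
minus the sum over r = k+1..-1.\<close>
definition isum :: "(int \<Rightarrow> real) \<Rightarrow> int \<Rightarrow> real" where
  "isum f k = (if 0 \<le> k then (\<Sum>r\<in>{0..k}. f r) else - (\<Sum>r\<in>{k+1..-1}. f r))"

end

theory Submission
  imports Defs
begin

lemma AB_base:
  fixes al be w0 w1 :: real
  assumes ne: "al \<noteq> be"
  shows "(w1 - be*w0)/(al-be) + (al*w0 - w1)/(al-be) = w0"
    and "(w1 - be*w0)/(al-be) * al + (al*w0 - w1)/(al-be) * be = w1"
proof -
  have d: "al - be \<noteq> 0" using ne by simp
  show "(w1 - be*w0)/(al-be) + (al*w0 - w1)/(al-be) = w0"
  proof -
    have "w1 - be*w0 + (al*w0 - w1) = w0 * (al - be)" by (simp add: algebra_simps)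
    then show ?thesis using d by (simp add: add_divide_distrib[symmetric])
  qed
  have "(w1 - be*w0)/(al-be) * al + (al*w0 - w1)/(al-be) * be = ((w1 - be*w0) * al + (al*w0 - w1) * be)/(al-be)"
    by (simp add: add_divide_distrib times_divide_eq_left)
  also have "(w1 - be*w0) * al + (al*w0 - w1) * be = w1 * (al - be)" by (simp add: algebra_simps)
  finally show "(w1 - be*w0)/(al-be) * al + (al*w0 - w1)/(al-be) * be = w1" using d by simp
qed

lemma binet_fwd:
  fixes al be p q w0 w1 :: real
  assumes r1: "al^2 = p*al + q" and r2: "be^2 = p*be + q" and ne: "al \<noteq> be"
  shows "rec_fwd p q w0 w1 n = (w1 - be*w0)/(al-be) * al^n + (al*w0 - w1)/(al-be) * be^n"
proof -
  define A where "A = (w1 - be*w0)/(al-be)"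
  define B where "B = (al*w0 - w1)/(al-be)"
  note base = AB_base[OF ne, of w1 w0, folded A_def B_def]
  have "rec_fwd p q w0 w1 n = A * al^n + B * be^n \<and> rec_fwd p q w0 w1 (Suc n) = A * al^Suc n + B * be^Suc n"
  proof (induction n)
    case 0 then show ?case using base by simp
  next
    case (Suc n)
    have "al^(Suc (Suc n)) = al^2 * al^n" by (simp add: power2_eq_square)
    also have "\<dots> = p * al^Suc n + q * al^n" unfolding r1 by (simp add: algebra_simps)
    finally have e1: "al^(Suc (Suc n)) = p * al^Suc n + q * al^n" .
    have "be^(Suc (Suc n)) = be^2 * be^n" by (simp add: power2_eq_square)
    also have "\<dots> = p * be^Suc n + q * be^n" unfolding r2 by (simp add: algebra_simps)
    finally have e2: "be^(Suc (Suc n)) = p * be^Suc n + q * be^n" .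
    from e1 e2 show ?case using Suc by (simp only: rec_fwd.simps) (simp add: algebra_simps)
  qed
  then show ?thesis by (simp add: A_def B_def)
qed

lemma binet_bwd:
  fixes al be p q w0 w1 :: real
  assumes r1: "al^2 = p*al + q" and r2: "be^2 = p*be + q" and ne: "al \<noteq> be" and q: "q \<noteq> 0"
  shows "rec_bwd p q w0 w1 n = (w1 - be*w0)/(al-be) * inverse al^n + (al*w0 - w1)/(al-be) * inverse be^n"
proof -
  have a0: "al \<noteq> 0" using r1 q by auto
  have b0: "be \<noteq> 0" using r2 q by auto
  define A where "A = (w1 - be*w0)/(al-be)"
  define B where "B = (al*w0 - w1)/(al-be)"
  note base = AB_base[OF ne, of w1 w0, folded A_def B_def]
  have ia: "inverse al = (al - p)/q" using r1 a0 q by (simp add: field_simps power2_eq_square)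
  have ib: "inverse be = (be - p)/q" using r2 b0 q by (simp add: field_simps power2_eq_square)
  have "rec_bwd p q w0 w1 n = A * inverse al^n + B * inverse be^n \<and> rec_bwd p q w0 w1 (Suc n) = A * inverse al^Suc n + B * inverse be^Suc n"
  proof (induction n)
    case 0
    have "A * inverse al + B * inverse be = (A*(al-p) + B*(be-p))/q"
      unfolding ia ib by (simp add: add_divide_distrib)
    also have "A*(al-p) + B*(be-p) = w1 - p*w0" using base by (simp add: algebra_simps flip: base(1))
    finally show ?case using base q by simp
  next
    case (Suc n)
    have "inverse al^(Suc (Suc n)) = (inverse al ^ n - p * inverse al^Suc n)/q" using r1 a0 q by (simp add: power2_eq_square field_simps)
    moreover have "inverse be^(Suc (Suc n)) = (inverse be ^ n - p * inverse be^Suc n)/q" using r2 b0 q by (simp add: power2_eq_square field_simps)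
    ultimately show ?case using Suc by (simp only: rec_bwd.simps) (simp add: algebra_simps diff_divide_distrib add_divide_distrib)
  qed
  then show ?thesis by (simp add: A_def B_def)
qed

lemma binet:
  fixes al be p q w0 w1 :: real
  assumes r1: "al^2 = p*al + q" and r2: "be^2 = p*be + q" and ne: "al \<noteq> be" and q: "q \<noteq> 0"
  shows "lrec p q w0 w1 n = (w1 - be*w0)/(al-be) * al powi n + (al*w0 - w1)/(al-be) * be powi n"
proof (cases "0 \<le> n")
  case True
  then have "n = int (nat n)" by simp
  then show ?thesis using binet_fwd[OF r1 r2 ne, of w0 w1 "nat n"] True unfolding lrec_def
    by (metis power_int_of_nat)
next
  case False
  then have "n = - int (nat (-n))" by simp
  then show ?thesis using binet_bwd[OF r1 r2 ne q, of w0 w1 "nat (-n)"] False unfolding lrec_def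
    by (metis power_int_minus power_int_of_nat power_inverse)
qed

lemma ident:
  fixes A1 B1 A2 B2 aa ab ac ad ae an ba bb bc bd be bn :: real
  assumes nz: "aa \<noteq> 0" "ab \<noteq> 0" "ac \<noteq> 0" "ba \<noteq> 0" "bb \<noteq> 0" "bc \<noteq> 0"
  shows "((A1 * (ad/aa) + B1 * (bd/ba)) * (A1 * (ae/ac) + B1 * (be/bc)) - (A1 * (ae/aa) + B1 * (be/ba)) * (A1 * (ad/ac) + B1 * (bd/bc))) * (A2 * (an*ac/ab) + B2 * (bn*bc/bb))
   = ((A1 * (ad/aa) + B1 * (bd/ba)) * (A2 * (ae/ab) + B2 * (be/bb)) - (A1 * (ae/aa) + B1 * (be/ba)) * (A2 * (ad/ab) + B2 * (bd/bb))) * (A1 * an + B1 * bn)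
   - ((A1 * (ad/ac) + B1 * (bd/bc)) * (A2 * (ae/ab) + B2 * (be/bb)) - (A1 * (ae/ac) + B1 * (be/bc)) * (A2 * (ad/ab) + B2 * (bd/bb))) * (A1 * (an*ac/aa) + B1 * (bn*bc/ba))"
  using nz by (simp add: field_simps)

lemma ident_seq:
  fixes X Y :: "int \<Rightarrow> real" and al be A1 B1 A2 B2 :: real
  assumes a0: "al \<noteq> 0" and b0: "be \<noteq> 0"
    and X: "\<And>n. X n = A1 * al powi n + B1 * be powi n"
    and Y: "\<And>n. Y n = A2 * al powi n + B2 * be powi n"
  shows "(X (d - a) * X (e - c) - X (e - a) * X (d - c)) * Y (n - b + c)
       = (X (d - a) * Y (e - b) - X (e - a) * Y (d - b)) * X n
       - (X (d - c) * Y (e - b) - X (e - c) * Y (d - b)) * X (n - a + c)"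
proof -
  have da: "\<And>u v. al powi (u - v) = al powi u / al powi v" using a0 by (simp add: power_int_diff)
  have db: "\<And>u v. be powi (u - v) = be powi u / be powi v" using b0 by (simp add: power_int_diff)
  have s1: "n - b + c = (n + c) - b" "n - a + c = (n + c) - a" by simp_all
  have pa: "al powi (n + c) = al powi n * al powi c" using a0 by (simp add: power_int_add)
  have pb: "be powi (n + c) = be powi n * be powi c" using b0 by (simp add: power_int_add)
  show ?thesis unfolding X Y s1 da db pa pb
    by (rule ident) (use a0 b0 in auto)
qed

lemma tele_int:
  fixes h :: "int \<Rightarrow> real"
  shows "(\<Sum>r\<in>{i..i + int n - 1}. h (r+1) - h r) = h (i + int n) - h i"
proof (induction n)
  case 0 then show ?case by simp
next
  case (Suc n)
  have "{i..i + int (Suc n) - 1} = insert (i + int n) {i..i + int n - 1}" by auto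
  then show ?case using Suc by (simp add: ac_simps)
qed

lemma sum_main:
  fixes X Y :: "int \<Rightarrow> real" and a b c k m :: int and Dxy D1 D2 :: real
  assumes H: "\<And>n. D2 * Y (n - b + c) = Dxy * X n - D1 * X (n - a + c)"
    and n1: "D1 \<noteq> 0" and n2: "D2 \<noteq> 0" and nk: "k < 0 \<longrightarrow> Dxy \<noteq> 0"
  shows "isum (\<lambda>r. (Dxy / D1) powi r * Y (m - k * (a - c) - b + c + (a - c) * r)) k
     = Dxy / D2 * (Dxy / D1) powi k * X m - D1 / D2 * X (m - (k + 1) * (a - c))"
proof -
  define x where "x = Dxy / D1"
  have xD: "D1 * x = Dxy" using n1 by (simp add: x_def)
  define g where "g r = x powi r * X (m - (k - r + 1) * (a - c))" for r
  have step: "x powi r * Y (m - k * (a - c) - b + c + (a - c) * r) = D1 / D2 * (g (r+1) - g r)"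
    if r: "x \<noteq> 0 \<or> 0 \<le> r" for r
  proof -
    define n where "n = m - (k - r) * (a - c)"
    have i1: "m - k * (a - c) - b + c + (a - c) * r = n - b + c" by (simp add: n_def algebra_simps)
    have i2: "m - (k - (r + 1) + 1) * (a - c) = n" by (simp add: n_def algebra_simps)
    have i3: "m - (k - r + 1) * (a - c) = n - a + c" by (simp add: n_def algebra_simps)
    have p1: "x powi (r + 1) = x powi r * x" using r by (intro power_int_add_1) auto
    have Yn: "Y (n - b + c) = (Dxy * X n - D1 * X (n - a + c)) / D2" using H[of n] n2
      by (simp add: field_simps)
    show ?thesis unfolding g_def i1 i2 i3 p1 Yn
      using n2 by (simp add: field_simps flip: xD)
  qed
  show ?thesis
  proof (cases "0 \<le> k")
    case True
    have "isum (\<lambda>r. x powi r * Y (m - k * (a - c) - b + c + (a - c) * r)) k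
        = (\<Sum>r\<in>{0..k}. D1 / D2 * (g (r+1) - g r))"
      unfolding isum_def using True by (simp add: step)
    also have "\<dots> = D1 / D2 * (\<Sum>r\<in>{0..0 + int (nat k + 1) - 1}. g (r+1) - g r)"
      using True by (simp add: sum_distrib_left)
    also have "\<dots> = D1 / D2 * (g (k + 1) - g 0)" unfolding tele_int using True by (simp add: ac_simps)
    also have "\<dots> = Dxy / D2 * x powi k * X m - D1 / D2 * X (m - (k + 1) * (a - c))"
    proof -
      have "x powi (k + 1) = x powi k * x" using True by (intro power_int_add_1) auto
      then show ?thesis unfolding g_def using n2 by (simp add: field_simps flip: xD)
    qed
    finally show ?thesis by (simp add: x_def)
  next
    case False
    then have x0: "x \<noteq> 0" using nk n1 by (simp add: x_def)
    have "isum (\<lambda>r. x powi r * Y (m - k * (a - c) - b + c + (a - c) * r)) k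
        = - (\<Sum>r\<in>{k+1..-1}. D1 / D2 * (g (r+1) - g r))"
      unfolding isum_def using False x0 by (simp add: step)
    also have "\<dots> = - (D1 / D2 * (\<Sum>r\<in>{(k+1)..(k+1) + int (nat (-k-1)) - 1}. g (r+1) - g r))"
      using False by (simp add: sum_distrib_left)
    also have "\<dots> = - (D1 / D2 * (g 0 - g (k + 1)))" unfolding tele_int using False by (simp add: ac_simps)
    also have "\<dots> = Dxy / D2 * x powi k * X m - D1 / D2 * X (m - (k + 1) * (a - c))"
    proof -
      have "x powi (k + 1) = x powi k * x" using x0 by (intro power_int_add_1) auto
      then show ?thesis unfolding g_def using n2 by (simp add: field_simps flip: xD)
    qed
    finally show ?thesis by (simp add: x_def)
  qed
qed
lemma H_lrec:
  fixes al be p q :: real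
  assumes r1: "al^2 = p*al + q" and r2: "be^2 = p*be + q" and ne: "al \<noteq> be" and q: "q \<noteq> 0"
    and X: "X = lrec p q x0 x1" and Y: "Y = lrec p q y0 y1"
  shows "(X (d - a) * X (e - c) - X (e - a) * X (d - c)) * Y (n - b + c)
       = (X (d - a) * Y (e - b) - X (e - a) * Y (d - b)) * X n
       - (X (d - c) * Y (e - b) - X (e - c) * Y (d - b)) * X (n - a + c)"
proof (rule ident_seq)
  show "al \<noteq> 0" using r1 q by auto
  show "be \<noteq> 0" using r2 q by auto
  show "\<And>n. X n = (x1 - be*x0)/(al-be) * al powi n + (al*x0 - x1)/(al-be) * be powi n"
    unfolding X by (rule binet[OF r1 r2 ne q])
  show "\<And>n. Y n = (y1 - be*y0)/(al-be) * al powi n + (al*y0 - y1)/(al-be) * be powi n"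
    unfolding Y by (rule binet[OF r1 r2 ne q])
qed

lemma fib_roots: "((1 + sqrt 5)/2)^2 = 1 * ((1 + sqrt 5)/2) + 1" "((1 - sqrt 5)/2)^2 = 1 * ((1 - sqrt 5)/2) + 1"
  "(1 + sqrt 5)/2 \<noteq> (1 - sqrt 5)/2"
  by (simp_all add: power2_eq_square field_simps)

lemma pell_roots: "(1 + sqrt 2)^2 = 2 * (1 + sqrt 2) + 1" "(1 - sqrt 2)^2 = 2 * (1 - sqrt 2) + 1"
  "1 + sqrt 2 \<noteq> 1 - sqrt 2"
  by (simp_all add: power2_eq_square algebra_simps)

lemma jac_roots: "(2::real)^2 = 1 * 2 + 2" "(-1::real)^2 = 1 * (-1) + 2" "(2::real) \<noteq> -1"
  by simp_all

lemma H_all: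
  fixes X Y :: "int \<Rightarrow> real"
  assumes pair: "(X, Y) \<in> {(Fib, Luc), (Luc, Fib), (Jac, JacL), (JacL, Jac), (Pell, PellL), (PellL, Pell)}"
  shows "(X (d - a) * X (e - c) - X (e - a) * X (d - c)) * Y (n - b + c)
       = (X (d - a) * Y (e - b) - X (e - a) * Y (d - b)) * X n
       - (X (d - c) * Y (e - b) - X (e - c) * Y (d - b)) * X (n - a + c)"
  using pair
  apply (elim insertE emptyE; simp only: prod.inject)
  apply (rule H_lrec[OF fib_roots]; simp add: Fib_def Luc_def)
  apply (rule H_lrec[OF fib_roots]; simp add: Fib_def Luc_def)
  apply (rule H_lrec[OF jac_roots]; simp add: Jac_def JacL_def)
  apply (rule H_lrec[OF jac_roots]; simp add: Jac_def JacL_def)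
  apply (rule H_lrec[OF pell_roots]; simp add: Pell_def PellL_def)
  apply (rule H_lrec[OF pell_roots]; simp add: Pell_def PellL_def)
  done

theorem theorem4:
  fixes X Y :: "int \<Rightarrow> real" and a b c d e k m :: int
  assumes pair: "(X, Y) \<in> {(Fib, Luc), (Luc, Fib), (Jac, JacL), (JacL, Jac), (Pell, PellL), (PellL, Pell)}"
    and D1: "X (d - c) * Y (e - b) - X (e - c) * Y (d - b) \<noteq> 0"
    and D2: "X (d - a) * X (e - c) - X (e - a) * X (d - c) \<noteq> 0"
    and Dxy: "k < 0 \<longrightarrow> X (d - a) * Y (e - b) - X (e - a) * Y (d - b) \<noteq> 0"
  shows "isum (\<lambda>r. ((X (d - a) * Y (e - b) - X (e - a) * Y (d - b))
                      / (X (d - c) * Y (e - b) - X (e - c) * Y (d - b))) powi r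
                  * Y (m - k * (a - c) - b + c + (a - c) * r)) k
       = (X (d - a) * Y (e - b) - X (e - a) * Y (d - b))
           / (X (d - a) * X (e - c) - X (e - a) * X (d - c))
         * ((X (d - a) * Y (e - b) - X (e - a) * Y (d - b))
             / (X (d - c) * Y (e - b) - X (e - c) * Y (d - b))) powi k * X m
         - (X (d - c) * Y (e - b) - X (e - c) * Y (d - b))
           / (X (d - a) * X (e - c) - X (e - a) * X (d - c))
         * X (m - (k + 1) * (a - c))"
  by (rule sum_main[OF _ D1 D2 Dxy], rule H_all[OF pair])

end
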